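(* Every pawful graph is diagonal.
   Context: All graphs are finite, simple, undirected and connected; $d$ denotes the shortest-path distance. A pawful graph is a connected graph $G$ of diameter at most $2$ such that for any three vertices $u,v,w$ with $d(u,v)=d(v,w)=2$ and $d(u,w)=1$ there exists a vertex $x$ with $d(x,u)=d(x,v)=d(x,w)=1$. For vertices $x_0,\dots,x_k$ put $\ell(x_0,\dots,x_k)=\sum_{i=0}^{k-1}d(x_i,x_{i+1})$. The magnitude chain complex: $\mathrm{MC}_{k,l}(G)$ is the free abelian group on $I_{k,l}(G)=\{(x_0,\dots,x_k)\in V(G)^{k+1}: x_i\neq x_{i+1}\ \forall i,\ \ell(x_0,\dots,x_k)=l\}$, with differential $\partial=\sum_{i=1}^{k-1}(-1)^i\partial_i:\mathrm{MC}_{k,l}\to\mathrm{MC}_{k-1,l}$, where $\partial_i(x_0,\dots,x_k)=(x_0,\dots,\hat x_i,\dots,x_k)$ if deleting $x_i$ does not change $\ell$, and $0$ otherwise. Magnitude homology: $\mathrm{MH}_{k,l}(G)=H_k(\mathrm{MC}_{*,l}(G))$. $G$ is diagonal if $\mathrm{MH}_{k,l}(G)=0$ whenever $k\ne l$. *)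

theory Defs
  imports Main
begin

definition simple_graph :: "'a set \<Rightarrow> ('a \<Rightarrow> 'a \<Rightarrow> bool) \<Rightarrow> bool" where
  "simple_graph V E \<longleftrightarrow> finite V \<and> (\<forall>u v. E u v \<longrightarrow> u \<in> V \<and> v \<in> V)
     \<and> (\<forall>u v. E u v \<longrightarrow> E v u) \<and> (\<forall>u. \<not> E u u)"

definition is_walk :: "'a set \<Rightarrow> ('a \<Rightarrow> 'a \<Rightarrow> bool) \<Rightarrow> 'a list \<Rightarrow> bool" where
  "is_walk V E xs \<longleftrightarrow> xs \<noteq> [] \<and> set xs \<subseteq> V \<and> (\<forall>i. Suc i < length xs \<longrightarrow> E (xs ! i) (xs ! Suc i))"

definition graph_connected :: "'a set \<Rightarrow> ('a \<Rightarrow> 'a \<Rightarrow> bool) \<Rightarrow> bool" where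
  "graph_connected V E \<longleftrightarrow> (\<forall>u\<in>V. \<forall>v\<in>V. \<exists>xs. is_walk V E xs \<and> hd xs = u \<and> last xs = v)"

definition gdist :: "'a set \<Rightarrow> ('a \<Rightarrow> 'a \<Rightarrow> bool) \<Rightarrow> 'a \<Rightarrow> 'a \<Rightarrow> nat" where
  "gdist V E u v = (LEAST n. \<exists>xs. is_walk V E xs \<and> hd xs = u \<and> last xs = v \<and> length xs = Suc n)"

definition pawful :: "'a set \<Rightarrow> ('a \<Rightarrow> 'a \<Rightarrow> bool) \<Rightarrow> bool" where
  "pawful V E \<longleftrightarrow> simple_graph V E \<and> graph_connected V E
     \<and> (\<forall>u\<in>V. \<forall>v\<in>V. gdist V E u v \<le> 2)
     \<and> (\<forall>u\<in>V. \<forall>v\<in>V. \<forall>w\<in>V. gdist V E u v = 2 \<and> gdist V E v w = 2 \<and> gdist V E u w = 1 \<longrightarrow>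
          (\<exists>x\<in>V. gdist V E x u = 1 \<and> gdist V E x v = 1 \<and> gdist V E x w = 1))"

definition tuple_len :: "'a set \<Rightarrow> ('a \<Rightarrow> 'a \<Rightarrow> bool) \<Rightarrow> 'a list \<Rightarrow> nat" where
  "tuple_len V E xs = (\<Sum>i < length xs - 1. gdist V E (xs ! i) (xs ! Suc i))"

(* generators I_{k,l}(G) of MC_{k,l}(G): tuples (x_0,...,x_k) as lists of length k+1 *)
definition MC_gens :: "'a set \<Rightarrow> ('a \<Rightarrow> 'a \<Rightarrow> bool) \<Rightarrow> nat \<Rightarrow> nat \<Rightarrow> 'a list set" where
  "MC_gens V E k l = {xs. length xs = Suc k \<and> set xs \<subseteq> V
      \<and> (\<forall>i<k. xs ! i \<noteq> xs ! Suc i) \<and> tuple_len V E xs = l}"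

definition del_at :: "nat \<Rightarrow> 'a list \<Rightarrow> 'a list" where
  "del_at i xs = take i xs @ drop (Suc i) xs"

(* elements of MC_{k,l}(G): integer-valued functions supported on I_{k,l}(G)
   (finitely supported since V is finite) *)
definition MC_chain :: "'a set \<Rightarrow> ('a \<Rightarrow> 'a \<Rightarrow> bool) \<Rightarrow> nat \<Rightarrow> nat \<Rightarrow> ('a list \<Rightarrow> int) \<Rightarrow> bool" where
  "MC_chain V E k l c \<longleftrightarrow> (\<forall>xs. xs \<notin> MC_gens V E k l \<longrightarrow> c xs = 0)"

definition MC_boundary :: "'a set \<Rightarrow> ('a \<Rightarrow> 'a \<Rightarrow> bool) \<Rightarrow> nat \<Rightarrow> nat \<Rightarrow> ('a list \<Rightarrow> int) \<Rightarrow> 'a list \<Rightarrow> int" where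
  "MC_boundary V E k l c y = (\<Sum>x \<in> MC_gens V E k l. c x *
      (\<Sum>i\<in>{1..<k}. if tuple_len V E (del_at i x) = l \<and> del_at i x = y then (-1) ^ i else 0))"

(* MH_{k,l}(G) = ker(\<partial>_k) / im(\<partial>_{k+1}) = 0, i.e. every cycle is a boundary *)
definition MH_zero :: "'a set \<Rightarrow> ('a \<Rightarrow> 'a \<Rightarrow> bool) \<Rightarrow> nat \<Rightarrow> nat \<Rightarrow> bool" where
  "MH_zero V E k l \<longleftrightarrow> (\<forall>c. MC_chain V E k l c \<and> MC_boundary V E k l c = (\<lambda>_. 0) \<longrightarrow>
      (\<exists>b. MC_chain V E (Suc k) l b \<and> MC_boundary V E (Suc k) l b = c))"

definition diagonal :: "'a set \<Rightarrow> ('a \<Rightarrow> 'a \<Rightarrow> bool) \<Rightarrow> bool" where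
  "diagonal V E \<longleftrightarrow> (\<forall>k l. k \<noteq> l \<longrightarrow> MH_zero V E k l)"

end

theory Submission
  imports Defs
begin

definition dd :: "('a \<Rightarrow> 'a \<Rightarrow> bool) \<Rightarrow> 'a \<Rightarrow> 'a \<Rightarrow> nat" where
  "dd E u v = (if u = v then 0 else if E u v then 1 else 2)"

lemma dd_le2: "dd E u v \<le> 2" by (simp add: dd_def)
lemma dd1: "dd E u v = 1 \<longleftrightarrow> u \<noteq> v \<and> E u v" by (simp add: dd_def)
lemma dd2: "dd E u v = 2 \<longleftrightarrow> u \<noteq> v \<and> \<not> E u v" by (simp add: dd_def)
lemma dd_ge1: "u \<noteq> v \<Longrightarrow> 1 \<le> dd E u v" by (simp add: dd_def)

lemma dd_tri: "dd E u w \<le> dd E u v + dd E v w"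
  unfolding dd_def by auto

fun tlen :: "('a \<Rightarrow> 'a \<Rightarrow> bool) \<Rightarrow> 'a list \<Rightarrow> nat" where
  "tlen E (a # b # xs) = dd E a b + tlen E (b # xs)"
| "tlen E _ = 0"

lemma tlen_sum: "tlen E x = (\<Sum>i<length x - 1. dd E (x!i) (x!Suc i))"
proof (induction E x rule: tlen.induct)
  case (1 E a b xs)
  then show ?case by (simp del: sum.lessThan_Suc add: sum.lessThan_Suc_shift)
qed auto

definition ins :: "nat \<Rightarrow> 'a \<Rightarrow> 'a list \<Rightarrow> 'a list" where
  "ins i y x = take i x @ y # drop i x"

lemma length_del[simp]: "i < length x \<Longrightarrow> length (del_at i x) = length x - 1"
  by (simp add: del_at_def)
lemma length_ins[simp]: "i \<le> length x \<Longrightarrow> length (ins i y x) = Suc (length x)"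
  by (simp add: ins_def)
lemma del_nth: "i < length x \<Longrightarrow> n < length x - 1 \<Longrightarrow> del_at i x ! n = (if n < i then x!n else x!Suc n)"
  by (auto simp: del_at_def nth_append min_def)
lemma ins_nth: "i \<le> length x \<Longrightarrow> n \<le> length x \<Longrightarrow> ins i y x ! n = (if n < i then x!n else if n = i then y else x!(n-1))"
  by (auto simp: ins_def nth_append min_def nth_Cons')
lemma del_ins: "i \<le> length x \<Longrightarrow> del_at i (ins i y x) = x"
  by (simp add: del_at_def ins_def min_def)
lemma ins_del: "i < length x \<Longrightarrow> ins i (x!i) (del_at i x) = x"
  by (simp add: del_at_def ins_def min_def id_take_nth_drop[symmetric])
lemma del_del: "j < i \<Longrightarrow> i < length x \<Longrightarrow> del_at j (del_at i x) = del_at (i-1) (del_at j x)"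
  by (cases "i = Suc j") (auto simp: del_at_def take_append drop_append min_def drop_take)
lemma set_del: "set (del_at i x) \<subseteq> set x"
  by (auto simp: del_at_def dest: in_set_takeD in_set_dropD)
lemma set_ins: "set (ins i y x) \<subseteq> insert y (set x)"
  by (auto simp: ins_def dest: in_set_takeD in_set_dropD)

lemma tlen_del: "0 < i \<Longrightarrow> Suc i < length x \<Longrightarrow>
  tlen E x + dd E (x!(i-1)) (x!Suc i) = tlen E (del_at i x) + dd E (x!(i-1)) (x!i) + dd E (x!i) (x!Suc i)"
proof (induction x arbitrary: i)
  case Nil then show ?case by simp
next
  case (Cons a xs)
  show ?case
  proof (cases "i = 1")
    case True
    then obtain b c rest where "xs = b # c # rest" using Cons.prems by (cases xs; cases "tl xs") auto
    then show ?thesis using True by (simp add: del_at_def)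
  next
    case False
    then obtain i' where i': "i = Suc i'" "0 < i'" using Cons.prems by (cases i) auto
    then obtain b xs' where xs: "xs = b # xs'" using Cons.prems by (cases xs) auto
    have "del_at i (a # xs) = a # del_at i' xs" using i' by (simp add: del_at_def)
    moreover have "del_at i' xs = b # del_at (i'-1) xs'" using i' xs by (cases i') (auto simp: del_at_def)
    moreover have IH: "tlen E xs + dd E (xs!(i'-1)) (xs!Suc i') = tlen E (del_at i' xs) + dd E (xs!(i'-1)) (xs!i') + dd E (xs!i') (xs!Suc i')"
      using Cons.IH[of i'] i' Cons.prems by simp
    ultimately show ?thesis using i' xs by (simp add: del_at_def)
  qed
qed

lemma tlen_del_le: "0 < i \<Longrightarrow> Suc i < length x \<Longrightarrow> tlen E (del_at i x) \<le> tlen E x"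
  using tlen_del[of i x E] dd_tri[of E "x!(i-1)" "x!Suc i" "x!i"] by linarith

lemma del_ne: assumes "\<forall>n. Suc n < length x \<longrightarrow> x!n \<noteq> x!Suc n" "i < i'" "i' < length x"
  shows "del_at i x \<noteq> del_at i' x"
proof
  assume "del_at i x = del_at i' x"
  then have "del_at i x ! i = del_at i' x ! i" by simp
  then have "x!Suc i = x!i" using assms by (simp add: del_nth)
  then show False using assms(1)[rule_format, of i] assms(2,3) by simp
qed

locale pg =
  fixes V :: "'a set" and E :: "'a \<Rightarrow> 'a \<Rightarrow> bool"
  assumes paw: "pawful V E"
begin

lemma sg: "simple_graph V E" using paw by (simp add: pawful_def)
lemma finV: "finite V" using sg by (simp add: simple_graph_def)
lemma EV: "E u v \<Longrightarrow> u \<in> V \<and> v \<in> V" using sg by (simp add: simple_graph_def)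
lemma Esym: "E u v \<Longrightarrow> E v u" using sg by (simp add: simple_graph_def)
lemma Eirr: "\<not> E u u" using sg by (simp add: simple_graph_def)
lemma conn: "graph_connected V E" using paw by (simp add: pawful_def)
lemma diam: "u \<in> V \<Longrightarrow> v \<in> V \<Longrightarrow> gdist V E u v \<le> 2" using paw by (simp add: pawful_def)

lemma walk_ex: "u \<in> V \<Longrightarrow> v \<in> V \<Longrightarrow> \<exists>n xs. is_walk V E xs \<and> hd xs = u \<and> last xs = v \<and> length xs = Suc n"
proof -
  assume "u \<in> V" "v \<in> V"
  then obtain xs where "is_walk V E xs" "hd xs = u" "last xs = v"
    using conn unfolding graph_connected_def by blast
  moreover have "length xs = Suc (length xs - 1)" using \<open>is_walk V E xs\<close> by (cases xs) (auto simp: is_walk_def)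
  ultimately show ?thesis by blast
qed

lemma gdist_wit: "u \<in> V \<Longrightarrow> v \<in> V \<Longrightarrow> \<exists>xs. is_walk V E xs \<and> hd xs = u \<and> last xs = v \<and> length xs = Suc (gdist V E u v)"
  unfolding gdist_def using walk_ex by (rule LeastI_ex) (simp_all)

lemma gdist_eq: assumes "u \<in> V" "v \<in> V" shows "gdist V E u v = dd E u v"
proof -
  obtain xs where w: "is_walk V E xs" "hd xs = u" "last xs = v" "length xs = Suc (gdist V E u v)"
    using gdist_wit[OF assms] by blast
  have le: "gdist V E u v \<le> n" if "is_walk V E ys" "hd ys = u" "last ys = v" "length ys = Suc n" for ys n
    unfolding gdist_def by (rule Least_le) (use that in blast)
  show ?thesis
  proof (cases "u = v")
    case True
    have "is_walk V E [u]" using assms by (simp add: is_walk_def)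
    then have "gdist V E u v \<le> 0" using le[of "[u]" 0] True by simp
    then show ?thesis using True by (simp add: dd_def)
  next
    case False
    have g0: "gdist V E u v \<noteq> 0"
    proof
      assume "gdist V E u v = 0"
      then obtain a where "xs = [a]" using w(4) by (cases xs) auto
      then show False using w False by simp
    qed
    show ?thesis
    proof (cases "E u v")
      case True
      have "is_walk V E [u,v]" using assms True by (auto simp: is_walk_def less_Suc_eq)
      then have "gdist V E u v \<le> 1" using le[of "[u,v]" 1] by simp
      then show ?thesis using g0 True False by (simp add: dd_def)
    next
      case nE: False
      have g1: "gdist V E u v \<noteq> 1"
      proof
        assume "gdist V E u v = 1"
        then obtain a b where xs: "xs = [a,b]" using w(4) by (cases xs; cases "tl xs") auto
        then have "E a b" using w(1) unfolding is_walk_def by force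
        then show False using w xs nE by simp
      qed
      then show ?thesis using g0 diam[OF assms] False nE by (simp add: dd_def)
    qed
  qed
qed

lemma dist1: "u \<in> V \<Longrightarrow> v \<in> V \<Longrightarrow> gdist V E u v = 1 \<longleftrightarrow> E u v"
  using Eirr by (auto simp: gdist_eq dd_def)
lemma dist2: "u \<in> V \<Longrightarrow> v \<in> V \<Longrightarrow> gdist V E u v = 2 \<longleftrightarrow> u \<noteq> v \<and> \<not> E u v"
  by (auto simp: gdist_eq dd_def)

lemma CN: assumes "q \<in> V" "r \<in> V" "q \<noteq> r" "\<not> E q r" shows "\<exists>y. E q y \<and> E y r"
proof -
  obtain xs where w: "is_walk V E xs" "hd xs = q" "last xs = r" "length xs = Suc (gdist V E q r)"
    using gdist_wit[OF assms(1,2)] by blast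
  have "gdist V E q r = 2" using assms by (simp add: dist2)
  then have l3: "length xs = 3" using w(4) by simp
  have a: "\<forall>i<2. E (xs ! i) (xs ! Suc i)" using w(1) l3 unfolding is_walk_def by auto
  have "E (xs!0) (xs!1)" "E (xs!1) (xs!2)" using a[rule_format, of 0] a[rule_format, of 1] by (simp_all add: numeral_2_eq_2)
  moreover have "xs!0 = q" using w(2) l3 by (cases xs) auto
  moreover have "xs!2 = r" using w(3) l3 last_conv_nth[of xs] by force
  ultimately show ?thesis by metis
qed

lemma CN3: assumes "p \<in> V" "q \<in> V" "r \<in> V" "E p q" "q \<noteq> r" "\<not> E q r"
  shows "\<exists>y. E q y \<and> E y r \<and> (p = y \<or> E p y)"
proof (cases "E p r")
  case True then show ?thesis using assms Esym by blast
next
  case False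
  have "p \<noteq> r" using assms Esym by blast
  then have "gdist V E p r = 2" "gdist V E r q = 2" "gdist V E p q = 1"
    using assms False Esym dist2[of p r] dist2[of r q] dist1[of p q] by auto
  then obtain x where "x \<in> V" "gdist V E x p = 1" "gdist V E x r = 1" "gdist V E x q = 1"
    using paw assms unfolding pawful_def by blast
  then have "E x p" "E x r" "E x q" using assms dist1[of x p] dist1[of x q] dist1[of x r] by auto
  then show ?thesis using Esym by blast
qed

lemma tuple_len_tlen: "set x \<subseteq> V \<Longrightarrow> tuple_len V E x = tlen E x"
  unfolding tuple_len_def tlen_sum
  by (rule sum.cong) (auto intro!: gdist_eq)

lemma gens_iff: "x \<in> MC_gens V E k l \<longleftrightarrow> length x = Suc k \<and> set x \<subseteq> V \<and> (\<forall>i<k. x!i \<noteq> x!Suc i) \<and> tlen E x = l"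
  unfolding MC_gens_def using tuple_len_tlen by auto

lemma finite_gens: "finite (MC_gens V E k l)"
proof -
  have "MC_gens V E k l \<subseteq> {xs. set xs \<subseteq> V \<and> length xs = Suc k}" by (auto simp: gens_iff)
  then show ?thesis using finite_lists_length_eq[OF finV] finite_subset by blast
qed

lemma dd_pos: "u \<noteq> v \<Longrightarrow> 1 \<le> dd E u v" by (simp add: dd_def)

lemma del_gens: assumes "x \<in> MC_gens V E (Suc k) l" "1 \<le> i" "i < Suc k" "tlen E (del_at i x) = l"
  shows "del_at i x \<in> MC_gens V E k l"
proof -
  have x: "length x = Suc (Suc k)" "set x \<subseteq> V" "\<forall>n<Suc k. x!n \<noteq> x!Suc n" "tlen E x = l"
    using assms(1) by (auto simp: gens_iff)
  have ne: "x!(i-1) \<noteq> x!Suc i"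
  proof
    assume eq: "x!(i-1) = x!Suc i"
    have "tlen E x + dd E (x!(i-1)) (x!Suc i) = tlen E (del_at i x) + dd E (x!(i-1)) (x!i) + dd E (x!i) (x!Suc i)"
      using tlen_del[of i x E] assms x by simp
    moreover have "1 \<le> dd E (x!(i-1)) (x!i)" "1 \<le> dd E (x!i) (x!Suc i)"
      using x(3)[rule_format, of "i-1"] x(3)[rule_format, of i] assms by (auto simp: dd_def)
    ultimately show False using eq assms(4) x(4) by (simp add: dd_def)
  qed
  have "\<forall>n<k. del_at i x ! n \<noteq> del_at i x ! Suc n"
  proof (intro allI impI)
    fix n assume n: "n < k"
    show "del_at i x ! n \<noteq> del_at i x ! Suc n"
    proof (cases "Suc n < i")
      case True then show ?thesis using x n assms by (simp add: del_nth)
    next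
      case False
      show ?thesis
      proof (cases "Suc n = i")
        case True
        then have "n = i - 1" by simp
        then show ?thesis using x n assms ne True by (simp add: del_nth)
      next
        case False
        then show ?thesis using x n assms \<open>\<not> Suc n < i\<close> by (simp add: del_nth)
      qed
    qed
  qed
  then show ?thesis using x assms set_del[of i x] by (auto simp: gens_iff)
qed

definition dl :: "nat \<Rightarrow> nat \<Rightarrow> 'a list \<Rightarrow> 'a list \<Rightarrow> int" where
  "dl k l x y = (\<Sum>i\<in>{1..<k}. if tuple_len V E (del_at i x) = l \<and> del_at i x = y then (-1)^i else 0)"

lemma bd_eq: "MC_boundary V E k l c y = (\<Sum>x\<in>MC_gens V E k l. c x * dl k l x y)"
  by (simp add: MC_boundary_def dl_def)

lemma tl_del: "set x \<subseteq> V \<Longrightarrow> tuple_len V E (del_at i x) = tlen E (del_at i x)"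
  using set_del tuple_len_tlen by (meson subset_trans)

lemma dl_tlen: "set x \<subseteq> V \<Longrightarrow> dl k l x y = (\<Sum>i\<in>{1..<k}. if tlen E (del_at i x) = l \<and> del_at i x = y then (-1)^i else 0)"
  unfolding dl_def by (simp add: tl_del)

lemma inner0: assumes x: "x \<in> MC_gens V E (Suc k) l"
  shows "(\<Sum>y\<in>MC_gens V E k l. dl (Suc k) l x y * dl k l y z) = 0"
proof -
  have xs: "length x = Suc (Suc k)" "set x \<subseteq> V" "tlen E x = l" using x by (auto simp: gens_iff)
  define f where "f i j = (if tlen E (del_at j (del_at i x)) = l \<and> del_at j (del_at i x) = z then (-1::int)^(i+j) else 0)" for i j
  let ?I = "{1..<Suc k}" and ?J = "{1..<k}"
  have "(\<Sum>y\<in>MC_gens V E k l. dl (Suc k) l x y * dl k l y z)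
      = (\<Sum>y\<in>MC_gens V E k l. \<Sum>i\<in>?I. (if tlen E (del_at i x) = l \<and> del_at i x = y then (-1)^i * dl k l y z else 0))"
    unfolding dl_tlen[OF xs(2)] sum_distrib_right by (rule sum.cong[OF refl], rule sum.cong[OF refl]) auto
  also have "\<dots> = (\<Sum>i\<in>?I. \<Sum>y\<in>MC_gens V E k l. (if tlen E (del_at i x) = l \<and> del_at i x = y then (-1)^i * dl k l y z else 0))"
    by (rule sum.swap)
  also have "\<dots> = (\<Sum>i\<in>?I. if tlen E (del_at i x) = l then (-1)^i * dl k l (del_at i x) z else 0)"
  proof (rule sum.cong[OF refl])
    fix i assume i: "i \<in> ?I"
    show "(\<Sum>y\<in>MC_gens V E k l. (if tlen E (del_at i x) = l \<and> del_at i x = y then (-1)^i * dl k l y z else 0))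
        = (if tlen E (del_at i x) = l then (-1)^i * dl k l (del_at i x) z else 0)"
    proof (cases "tlen E (del_at i x) = l")
      case True
      then have "del_at i x \<in> MC_gens V E k l" using del_gens[OF x] i by auto
      then show ?thesis using True by (simp add: finite_gens)
    qed simp
  qed
  also have "\<dots> = (\<Sum>i\<in>?I. \<Sum>j\<in>?J. f i j)"
  proof (rule sum.cong[OF refl])
    fix i assume i: "i \<in> ?I"
    have sd: "set (del_at i x) \<subseteq> V" using xs set_del by (meson subset_trans)
    show "(if tlen E (del_at i x) = l then (-1)^i * dl k l (del_at i x) z else 0) = (\<Sum>j\<in>?J. f i j)"
    proof (cases "tlen E (del_at i x) = l")
      case True
      then show ?thesis by (simp add: dl_tlen[OF sd] f_def sum_distrib_left power_add if_distrib cong: if_cong)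
    next
      case False
      have le: "tlen E (del_at i x) \<le> l" using tlen_del_le[of i x E] i xs by simp
      have "f i j = 0" if j: "j \<in> ?J" for j
      proof -
        have "tlen E (del_at j (del_at i x)) \<le> tlen E (del_at i x)"
          using tlen_del_le[of j "del_at i x" E] i j xs by simp
        then show ?thesis using le False by (simp add: f_def)
      qed
      then show ?thesis using False by simp
    qed
  qed
  also have "\<dots> = (\<Sum>p\<in>?I \<times> ?J. f (fst p) (snd p))"
    by (simp add: sum.cartesian_product split_def)
  also have "\<dots> = 0"
  proof -
    let ?S1 = "{p\<in>?I \<times> ?J. snd p < fst p}" and ?S2 = "{p\<in>?I \<times> ?J. \<not> snd p < fst p}"
    let ?h = "\<lambda>p. (snd p, fst p - 1)"
    have fin: "finite (?I \<times> ?J)" by simp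
    have split: "(\<Sum>p\<in>?I \<times> ?J. f (fst p) (snd p)) = (\<Sum>p\<in>?S1. f (fst p) (snd p)) + (\<Sum>p\<in>?S2. f (fst p) (snd p))"
    proof -
      have eq: "?I \<times> ?J = ?S1 \<union> ?S2" by auto
      have "(\<Sum>p\<in>?I \<times> ?J. f (fst p) (snd p)) = (\<Sum>p\<in>?S1 \<union> ?S2. f (fst p) (snd p))"
        using eq by (rule arg_cong)
      also have "\<dots> = (\<Sum>p\<in>?S1. f (fst p) (snd p)) + (\<Sum>p\<in>?S2. f (fst p) (snd p))"
        by (rule sum.union_disjoint) auto
      finally show ?thesis .
    qed
    have bij: "bij_betw ?h ?S1 ?S2"
    proof (rule bij_betw_byWitness[where f' = "\<lambda>p. (snd p + 1, fst p)"])
      show "\<forall>a\<in>?S1. (\<lambda>p. (snd p + 1, fst p)) (?h a) = a" by auto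
      show "\<forall>a\<in>?S2. ?h ((\<lambda>p. (snd p + 1, fst p)) a) = a" by auto
      show "?h ` ?S1 \<subseteq> ?S2" by auto
      show "(\<lambda>p. (snd p + 1, fst p)) ` ?S2 \<subseteq> ?S1" by auto
    qed
    have "(\<Sum>p\<in>?S2. f (fst p) (snd p)) = (\<Sum>p\<in>?S1. f (fst (?h p)) (snd (?h p)))"
      using sum.reindex_bij_betw[OF bij, of "\<lambda>p. f (fst p) (snd p)"] by simp
    also have "\<dots> = (\<Sum>p\<in>?S1. - f (fst p) (snd p))"
    proof (rule sum.cong[OF refl])
      fix p assume p: "p \<in> ?S1"
      obtain i j where pij: "p = (i, j)" by force
      have ij: "1 \<le> j" "j < i" "i < Suc k" using p pij by auto
      have dd: "del_at (i-1) (del_at j x) = del_at j (del_at i x)" using del_del[of j i x] ij xs by simp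
      have sg: "(-1::int)^(j + (i-1)) = - ((-1)^(i+j))"
      proof -
        have "i + j = Suc (j + (i - 1))" using ij by simp
        then have "(-1::int)^(i+j) = - ((-1)^(j + (i-1)))" by (simp only: power_Suc)
        then show ?thesis by simp
      qed
      show "f (fst (?h p)) (snd (?h p)) = - f (fst p) (snd p)"
        using pij dd sg by (auto simp add: f_def)
    qed
    also have "\<dots> = - (\<Sum>p\<in>?S1. f (fst p) (snd p))" by (simp add: sum_negf)
    finally show ?thesis using split by simp
  qed
  finally show ?thesis .
qed

lemma bd_bd: "MC_boundary V E k l (MC_boundary V E (Suc k) l b) = (\<lambda>_. 0)"
proof
  fix z
  have "MC_boundary V E k l (MC_boundary V E (Suc k) l b) z
      = (\<Sum>y\<in>MC_gens V E k l. \<Sum>x\<in>MC_gens V E (Suc k) l. b x * (dl (Suc k) l x y * dl k l y z))"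
    by (simp add: bd_eq sum_distrib_right mult.assoc)
  also have "\<dots> = (\<Sum>x\<in>MC_gens V E (Suc k) l. b x * (\<Sum>y\<in>MC_gens V E k l. dl (Suc k) l x y * dl k l y z))"
    by (subst sum.swap) (simp add: sum_distrib_left)
  also have "\<dots> = 0" by (simp add: inner0)
  finally show "MC_boundary V E k l (MC_boundary V E (Suc k) l b) z = 0" .
qed

definition ch :: "nat \<Rightarrow> 'a \<Rightarrow> 'a \<Rightarrow> 'a \<Rightarrow> 'a" where
  "ch j p q r = (SOME y. E q y \<and> E y r \<and> (j = 0 \<or> p = y \<or> E p y))"

definition chx :: "'a list \<Rightarrow> nat \<Rightarrow> 'a \<Rightarrow> 'a" where
  "chx x j r = ch j (x!(j-1)) (x!j) r"

definition two :: "'a list \<Rightarrow> nat \<Rightarrow> bool" where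
  "two x j \<longleftrightarrow> Suc j < length x \<and> \<not> E (x!j) (x!Suc j)"

definition phi :: "'a list \<Rightarrow> nat" where
  "phi x = (LEAST j. two x j)"

definition midAt :: "'a list \<Rightarrow> nat \<Rightarrow> bool" where
  "midAt x j \<longleftrightarrow> Suc (Suc j) < length x \<and> E (x!j) (x!Suc j) \<and> E (x!Suc j) (x!Suc (Suc j))
     \<and> x!j \<noteq> x!Suc (Suc j) \<and> \<not> E (x!j) (x!Suc (Suc j)) \<and> x!Suc j = chx x j (x!Suc (Suc j))"

definition isU :: "'a list \<Rightarrow> bool" where
  "isU x \<longleftrightarrow> (\<exists>j. two x j) \<and> (\<forall>j<phi x. \<not> midAt x j)"

definition up :: "'a list \<Rightarrow> 'a list" where
  "up x = ins (Suc (phi x)) (chx x (phi x) (x!Suc (phi x))) x"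

definition Dset :: "'a list \<Rightarrow> nat set" where
  "Dset x = {i. 0 < i \<and> i < phi x \<and> x!(i-1) \<noteq> x!Suc i \<and> \<not> E (x!(i-1)) (x!Suc i)}"

definition rho :: "'a list \<Rightarrow> nat" where
  "rho x = card (Dset x) * length x + (length x - phi x)"

lemma ch_spec: assumes "p \<in> V" "q \<in> V" "r \<in> V" "q \<noteq> r" "\<not> E q r" "0 < j \<Longrightarrow> E p q"
  shows "E q (ch j p q r) \<and> E (ch j p q r) r \<and> (j = 0 \<or> p = ch j p q r \<or> E p (ch j p q r))"
proof -
  have "\<exists>y. E q y \<and> E y r \<and> (j = 0 \<or> p = y \<or> E p y)"
  proof (cases "j = 0")
    case True then show ?thesis using CN[OF assms(2-5)] by blast
  next
    case False then show ?thesis using CN3[OF assms(1-3) _ assms(4,5)] assms(6) by blast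
  qed
  then show ?thesis unfolding ch_def by (rule someI_ex)
qed

lemma phi_two: "\<exists>j. two x j \<Longrightarrow> two x (phi x)"
  unfolding phi_def by (rule LeastI_ex)
lemma phi_min: "i < phi x \<Longrightarrow> \<not> two x i"
  unfolding phi_def by (rule not_less_Least)
lemma phi_eq: "two x j \<Longrightarrow> (\<And>i. i < j \<Longrightarrow> \<not> two x i) \<Longrightarrow> phi x = j"
  unfolding phi_def by (rule Least_equality) (auto simp: not_less[symmetric])

lemma finite_Dset: "finite (Dset x)"
  by (rule finite_subset[of _ "{..<phi x}"]) (auto simp: Dset_def)

lemma allowed: assumes "z \<in> MC_gens V E (Suc k) l" "1 \<le> i" "i < Suc k" "tlen E (del_at i z) = l"
  shows "E (z!(i-1)) (z!i) \<and> E (z!i) (z!Suc i) \<and> z!(i-1) \<noteq> z!Suc i \<and> \<not> E (z!(i-1)) (z!Suc i)"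
proof -
  have zs: "length z = Suc (Suc k)" "\<forall>n<Suc k. z!n \<noteq> z!Suc n" "tlen E z = l" using assms(1) by (auto simp: gens_iff)
  have "tlen E z + dd E (z!(i-1)) (z!Suc i) = tlen E (del_at i z) + dd E (z!(i-1)) (z!i) + dd E (z!i) (z!Suc i)"
    using tlen_del[of i z E] assms zs by simp
  moreover have "z!(i-1) \<noteq> z!i" "z!i \<noteq> z!Suc i"
    using zs(2)[rule_format, of "i-1"] zs(2)[rule_format, of i] assms by auto
  ultimately have "dd E (z!(i-1)) (z!Suc i) = dd E (z!(i-1)) (z!i) + dd E (z!i) (z!Suc i)"
    "1 \<le> dd E (z!(i-1)) (z!i)" "1 \<le> dd E (z!i) (z!Suc i)"
    using assms(4) zs(3) dd_ge1 by auto
  then have "dd E (z!(i-1)) (z!i) = 1" "dd E (z!i) (z!Suc i) = 1" "dd E (z!(i-1)) (z!Suc i) = 2"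
    using dd_le2[of E "z!(i-1)" "z!Suc i"] by linarith+
  then show ?thesis unfolding dd1 dd2 by blast
qed

lemma up_main: assumes x: "x \<in> MC_gens V E k l" and U: "isU x"
  shows "up x \<in> MC_gens V E (Suc k) l \<and> dl (Suc k) l (up x) x = (-1)^(Suc (phi x))
     \<and> (\<forall>w. isU w \<and> w \<noteq> x \<and> dl (Suc k) l (up x) w \<noteq> 0 \<longrightarrow> rho w < rho x)"
proof -
  define j where "j = phi x"
  define y where "y = chx x j (x!Suc j)"
  define z where "z = up x"
  have xs: "length x = Suc k" "set x \<subseteq> V" "\<forall>n<k. x!n \<noteq> x!Suc n" "tlen E x = l" using x by (auto simp: gens_iff)
  have tj: "two x j" using U phi_two unfolding isU_def j_def by blast
  then have F1: "Suc j < length x" "\<not> E (x!j) (x!Suc j)" "x!j \<noteq> x!Suc j" "j < k"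
    using xs by (auto simp: two_def)
  have F2: "E (x!i) (x!Suc i)" if "i < j" for i
    using phi_min[of i x] that F1 unfolding j_def two_def by auto
  have inV: "x!n \<in> V" if "n < length x" for n using xs(2) that by auto
  have F3: "E (x!j) y \<and> E y (x!Suc j) \<and> (j = 0 \<or> x!(j-1) = y \<or> E (x!(j-1)) y)"
  proof -
    have v: "x!(j-1) \<in> V" "x!j \<in> V" "x!Suc j \<in> V" using inV F1 by auto
    have e: "0 < j \<Longrightarrow> E (x!(j-1)) (x!j)" using F2[of "j-1"] by simp
    show ?thesis unfolding y_def chx_def using ch_spec[OF v F1(3) F1(2) e] by simp
  qed
  have yV: "y \<in> V" using F3 EV by blast
  have zdef: "z = ins (Suc j) y x" unfolding z_def up_def j_def y_def by simp
  have lz: "length z = Suc (Suc k)" using zdef F1 xs by simp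
  have zn: "z!n = (if n < Suc j then x!n else if n = Suc j then y else x!(n-1))" if "n \<le> Suc k" for n
    using zdef ins_nth[of "Suc j" x n y] F1 xs that by simp
  have zdist: "\<forall>n<Suc k. z!n \<noteq> z!Suc n"
  proof (intro allI impI)
    fix n assume n: "n < Suc k"
    consider "n < j" | "n = j" | "n = Suc j" | "Suc j < n" by linarith
    then show "z!n \<noteq> z!Suc n"
    proof cases
      case 1 then show ?thesis using zn[of n] zn[of "Suc n"] n xs F1 by simp
    next
      case 2 then show ?thesis using zn[of n] zn[of "Suc n"] n F3 Eirr by auto
    next
      case 3 then show ?thesis using zn[of n] zn[of "Suc n"] n F3 Eirr by auto
    next
      case 4
      then have "n = Suc (n-1)" by simp
      then show ?thesis using zn[of n] zn[of "Suc n"] n xs(3)[rule_format, of "n-1"] 4 by simp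
    qed
  qed
  have dzx: "del_at (Suc j) z = x" using zdef del_ins[of "Suc j" x y] F1 by simp
  have tz: "tlen E z = l"
  proof -
    have "tlen E z + dd E (z!j) (z!Suc (Suc j)) = tlen E (del_at (Suc j) z) + dd E (z!j) (z!Suc j) + dd E (z!Suc j) (z!Suc (Suc j))"
      using tlen_del[of "Suc j" z E] lz F1 xs by simp
    moreover have "z!j = x!j" "z!Suc j = y" "z!Suc (Suc j) = x!Suc j" using zn F1 xs by auto
    moreover have "dd E (x!j) (x!Suc j) = 2" "dd E (x!j) y = 1" "dd E y (x!Suc j) = 1"
    proof -
      have "E (x!j) y" "E y (x!Suc j)" using F3 by auto
      then show "dd E (x!j) (x!Suc j) = 2" "dd E (x!j) y = 1" "dd E y (x!Suc j) = 1"
        using F1 Eirr by (auto simp: dd_def)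
    qed
    ultimately show ?thesis using dzx xs by simp
  qed
  have zV: "set z \<subseteq> V" using zdef set_ins[of "Suc j" y x] xs yV by auto
  have zG: "z \<in> MC_gens V E (Suc k) l" using lz zV zdist tz by (simp add: gens_iff)
  have dlz: "dl (Suc k) l z w = (\<Sum>i\<in>{1..<Suc k}. if tlen E (del_at i z) = l \<and> del_at i z = w then (-1)^i else 0)" for w
    using dl_tlen[OF zV] .
  have part2: "dl (Suc k) l z x = (-1)^(Suc j)"
  proof -
    have "dl (Suc k) l z x = (\<Sum>i\<in>{1..<Suc k}. if i = Suc j then (-1)^i else 0)"
      unfolding dlz
    proof (rule sum.cong[OF refl])
      fix i assume i: "i \<in> {1..<Suc k}"
      show "(if tlen E (del_at i z) = l \<and> del_at i z = x then (-1::int)^i else 0) = (if i = Suc j then (-1)^i else 0)"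
      proof (cases "i = Suc j")
        case True then show ?thesis using dzx xs by simp
      next
        case False
        have "del_at i z \<noteq> del_at (Suc j) z"
        proof (cases "i < Suc j")
          case True then show ?thesis using del_ne[of z i "Suc j"] zdist lz F1 xs by auto
        next
          case False2: False
          then have "Suc j < i" using False by simp
          then show ?thesis using del_ne[of z "Suc j" i] zdist lz i by auto
        qed
        then show ?thesis using False dzx by simp
      qed
    qed
    also have "\<dots> = (-1)^(Suc j)" using F1 by simp
    finally show ?thesis .
  qed
  have part3: "rho w < rho x" if w: "isU w" "w \<noteq> x" "dl (Suc k) l z w \<noteq> 0" for w
  proof -
    have "\<exists>i\<in>{1..<Suc k}. tlen E (del_at i z) = l \<and> del_at i z = w"
    proof (rule ccontr)
      assume "\<not> ?thesis"
      then have "dl (Suc k) l z w = 0" unfolding dlz by (intro sum.neutral) auto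
      then show False using w(3) by simp
    qed
    then obtain i where i: "1 \<le> i" "i < Suc k" "tlen E (del_at i z) = l" "del_at i z = w" by auto
    have al: "E (z!(i-1)) (z!i)" "E (z!i) (z!Suc i)" "z!(i-1) \<noteq> z!Suc i" "\<not> E (z!(i-1)) (z!Suc i)"
      using allowed[OF zG i(1,2,3)] by auto
    have iSj: "i \<noteq> Suc j" using dzx w(2) i(4) by auto
    have lw: "length w = Suc k" using i lz by auto
    have wn: "w!n = (if n < i then z!n else z!Suc n)" if "n < Suc k" for n
      using del_nth[of i z n] i lz that by auto
    have Lx: "length x = Suc k" by (rule xs(1))
    consider "i < j" | "i = j" | "i = Suc (Suc j)" | "Suc (Suc j) < i" using iSj by linarith
    then show ?thesis
    proof cases
      case 1
      have zi: "z!(i-1) = x!(i-1)" "z!i = x!i" "z!Suc i = x!Suc i" using zn[of "i-1"] zn[of i] zn[of "Suc i"] 1 F1 xs by auto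
      have iD: "i \<in> Dset x" using al zi 1 i unfolding Dset_def j_def by auto
      have wlo: "w!n = x!n" if "n < i" for n using wn[of n] zn[of n] that 1 F1 xs by auto
      have wi: "w!i = x!Suc i" using wn[of i] zi i by auto
      have pw: "phi w = i - 1"
      proof (rule phi_eq)
        show "two w (i-1)" using wlo[of "i-1"] wi al zi i lw unfolding two_def by auto
        fix n assume n: "n < i - 1"
        then show "\<not> two w n" using wlo[of n] wlo[of "Suc n"] F2[of n] 1 unfolding two_def by auto
      qed
      have sub: "Dset w \<subseteq> Dset x - {i}"
      proof
        fix i' assume "i' \<in> Dset w"
        then have h: "0 < i'" "i' < i - 1" "w!(i'-1) \<noteq> w!Suc i'" "\<not> E (w!(i'-1)) (w!Suc i')"
          unfolding Dset_def pw by auto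
        then show "i' \<in> Dset x - {i}" using wlo[of "i'-1"] wlo[of "Suc i'"] 1 unfolding Dset_def j_def by auto
      qed
      have "card (Dset w) < card (Dset x)"
        by (rule psubset_card_mono[OF finite_Dset]) (use sub iD in blast)
      then have "(card (Dset w) + 1) * Suc k \<le> card (Dset x) * Suc k" by (intro mult_le_mono1) simp
      moreover have "(card (Dset w) + 1) * Suc k = card (Dset w) * Suc k + Suc k" by simp
      moreover have r1: "rho w = card (Dset w) * Suc k + (Suc k - (i - 1))" unfolding rho_def pw lw ..
      moreover have r2: "rho x = card (Dset x) * Suc k + (Suc k - j)" by (simp add: rho_def Lx j_def)
      moreover have "Suc k - (i - 1) \<le> Suc k" "0 < Suc k - j" using F1 by auto
      ultimately show ?thesis by linarith
    next
      case 2
      have "z!(j-1) = x!(j-1)" "z!j = x!j" "z!Suc j = y" using zn[of "j-1"] zn[of j] zn[of "Suc j"] F1 xs by auto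
      then show ?thesis using al 2 F3 i by auto
    next
      case 3
      have zi: "z!(i-1) = y" "z!i = x!Suc j" "z!Suc i = x!Suc (Suc j)" using zn[of "Suc j"] zn[of i] zn[of "Suc i"] 3 i by auto
      have wlo: "w!n = x!n" if "n < Suc j" for n using wn[of n] zn[of n] that 3 F1 xs by auto
      have wj: "w!Suc j = y" using wn[of "Suc j"] zn[of "Suc j"] 3 F1 xs by auto
      have wj2: "w!Suc (Suc j) = x!Suc (Suc j)" using wn[of "Suc (Suc j)"] zi 3 i by auto
      have pw: "phi w = Suc j"
      proof (rule phi_eq)
        show "two w (Suc j)" using wj wj2 al zi i lw 3 unfolding two_def by auto
        fix n assume n: "n < Suc j"
        show "\<not> two w n"
        proof (cases "n = j")
          case True then show ?thesis using wlo[of j] wj F3 unfolding two_def by auto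
        next
          case False then show ?thesis using wlo[of n] wlo[of "Suc n"] F2[of n] n unfolding two_def by auto
        qed
      qed
      have "Dset w = Dset x"
      proof (rule set_eqI)
        fix i'
        show "i' \<in> Dset w \<longleftrightarrow> i' \<in> Dset x"
        proof (cases "i' = j")
          case True
          have "i' \<notin> Dset x" using True unfolding Dset_def j_def by auto
          moreover have "i' \<notin> Dset w" using True wlo[of "j-1"] wj F3 unfolding Dset_def pw by auto
          ultimately show ?thesis by simp
        next
          case False
          then show ?thesis using wlo[of "i'-1"] wlo[of "Suc i'"] unfolding Dset_def pw j_def[symmetric]
            by (cases "i' < j") auto
        qed
      qed
      then have r1: "rho w = card (Dset x) * Suc k + (Suc k - Suc j)" unfolding rho_def pw lw by simp
      moreover have r2: "rho x = card (Dset x) * Suc k + (Suc k - j)" by (simp add: rho_def Lx j_def)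
      ultimately show ?thesis using F1 by linarith
    next
      case 4
      have wlo: "w!n = z!n" if "n < i" for n using wn[of n] that i by auto
      have w0: "w!j = x!j" "w!Suc j = y" "w!Suc (Suc j) = x!Suc j" "w!(j-1) = x!(j-1)"
        using wlo[of j] wlo[of "Suc j"] wlo[of "Suc (Suc j)"] wlo[of "j-1"] zn[of j] zn[of "Suc j"] zn[of "Suc (Suc j)"] zn[of "j-1"] 4 i
        by auto
      have ch: "chx w j (x!Suc j) = y" unfolding chx_def y_def using w0 by simp
      have mid: "midAt w j" unfolding midAt_def using w0 ch F1 F3 lw 4 i by auto
      have "\<not> two w n" if nle: "n \<le> Suc j" for n
      proof -
        consider "n < j" | "n = j" | "n = Suc j" using nle by linarith
        then show ?thesis
        proof cases
          case 1 then show ?thesis using wlo[of n] wlo[of "Suc n"] zn[of n] zn[of "Suc n"] F2[of n] 4 i F1 xs unfolding two_def by auto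
        qed (use w0 F3 in \<open>auto simp: two_def\<close>)
      qed
      moreover have "two w (phi w)" using w(1) phi_two unfolding isU_def by blast
      ultimately have "j < phi w" by (meson not_le less_imp_le_nat Suc_le_eq linorder_not_less)
      then show ?thesis using w(1) mid unfolding isU_def by blast
    qed
  qed
  show ?thesis using zG part2 part3 unfolding z_def j_def by blast
qed

lemma down_ex: assumes x: "x \<in> MC_gens V E k l" and h: "\<exists>j. two x j" and nU: "\<not> isU x"
  shows "\<exists>k'. k = Suc k' \<and> (\<exists>y. y \<in> MC_gens V E k' l \<and> isU y \<and> up y = x)"
proof -
  have xs: "length x = Suc k" "set x \<subseteq> V" "\<forall>n<k. x!n \<noteq> x!Suc n" "tlen E x = l" using x by (auto simp: gens_iff)
  have ex: "\<exists>j. j < phi x \<and> midAt x j" using h nU unfolding isU_def by blast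
  define m where "m = (LEAST j. j < phi x \<and> midAt x j)"
  have mm: "m < phi x" "midAt x m" using LeastI_ex[OF ex] unfolding m_def by auto
  have mmin: "\<not> midAt x j" if "j < m" for j
    using not_less_Least[of j "\<lambda>j. j < phi x \<and> midAt x j"] that mm unfolding m_def[symmetric] by auto
  have M: "Suc (Suc m) < length x" "E (x!m) (x!Suc m)" "E (x!Suc m) (x!Suc (Suc m))"
     "x!m \<noteq> x!Suc (Suc m)" "\<not> E (x!m) (x!Suc (Suc m))" "x!Suc m = chx x m (x!Suc (Suc m))"
    using mm(2) unfolding midAt_def by auto
  obtain k' where k': "k = Suc k'" using M xs by (cases k) auto
  define y where "y = del_at (Suc m) x"
  have ly: "length y = Suc k'" using M xs k' by (simp add: y_def)
  have yn: "y!n = (if n < Suc m then x!n else x!Suc n)" if "n < Suc k'" for n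
    using del_nth[of "Suc m" x n] M xs k' that unfolding y_def by auto
  have tl: "tlen E y = l"
  proof -
    have "tlen E x + dd E (x!m) (x!Suc (Suc m)) = tlen E y + dd E (x!m) (x!Suc m) + dd E (x!Suc m) (x!Suc (Suc m))"
      using tlen_del[of "Suc m" x E] M unfolding y_def by simp
    moreover have "dd E (x!m) (x!Suc (Suc m)) = 2" "dd E (x!m) (x!Suc m) = 1" "dd E (x!Suc m) (x!Suc (Suc m)) = 1"
      using M Eirr by (auto simp: dd_def)
    ultimately show ?thesis using xs by simp
  qed
  have yG: "y \<in> MC_gens V E k' l"
    unfolding y_def by (rule del_gens) (use x k' M xs tl y_def in auto)
  have two_y: "two y m" using yn[of m] yn[of "Suc m"] M ly xs k' unfolding two_def by auto
  have F2: "E (x!n) (x!Suc n)" if "n < phi x" for n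
    using phi_min[of n x] phi_two[OF h] that unfolding two_def by auto
  have py: "phi y = m"
  proof (rule phi_eq[OF two_y])
    fix n assume n: "n < m"
    then show "\<not> two y n" using yn[of n] yn[of "Suc n"] F2[of n] mm ly M xs k' unfolding two_def by auto
  qed
  have ylo: "y!n = x!n" if "n \<le> m" for n using yn[of n] that M xs k' by auto
  have nomid: "\<not> midAt y j" if j: "j < m" for j
  proof
    assume my: "midAt y j"
    show False
    proof (cases "Suc j = m")
      case True
      then show False using my ylo[of m] yn[of "Suc m"] M ly unfolding midAt_def by auto
    next
      case False
      then have jm: "Suc (Suc j) \<le> m" using j by simp
      have e: "y!j = x!j" "y!Suc j = x!Suc j" "y!Suc (Suc j) = x!Suc (Suc j)" "y!(j-1) = x!(j-1)"
        using ylo jm by auto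
      have "chx y j = chx x j" unfolding chx_def using e by simp
      then have "midAt x j" using my e jm M unfolding midAt_def by auto
      then show False using mmin j by blast
    qed
  qed
  have yU: "isU y" unfolding isU_def py using two_y nomid by blast
  have "chx y m (y!Suc m) = x!Suc m"
  proof -
    have "y!Suc m = x!Suc (Suc m)" using yn[of "Suc m"] M xs k' by auto
    moreover have "chx y m = chx x m" unfolding chx_def using ylo[of m] ylo[of "m-1"] by simp
    ultimately show ?thesis using M by simp
  qed
  then have "up y = ins (Suc m) (x!Suc m) y" unfolding up_def py by simp
  then have "up y = x" using ins_del[of "Suc m" x] M unfolding y_def by simp
  then show ?thesis using k' yG yU by blast
qed

lemma has_two: assumes x: "x \<in> MC_gens V E k l" and kl: "k < l" shows "\<exists>j. two x j"
proof (rule ccontr)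
  assume "\<not> ?thesis"
  then have e: "E (x!j) (x!Suc j)" if "Suc j < length x" for j using that unfolding two_def by auto
  have xs: "length x = Suc k" "tlen E x = l" using x by (auto simp: gens_iff)
  have "tlen E x = (\<Sum>i<k. 1)"
    unfolding tlen_sum xs(1)
  proof (rule sum.cong)
    show "{..<Suc k - 1} = {..<k}" by simp
  next
    fix i assume "i \<in> {..<k}"
    then have ee: "E (x!i) (x!Suc i)" using e xs by simp
    then have "x!i \<noteq> x!Suc i" using Eirr by metis
    then show "dd E (x!i) (x!Suc i) = 1" using ee by (simp add: dd_def)
  qed
  then show False using xs kl by simp
qed

lemma gens_empty: assumes "l < k" shows "MC_gens V E k l = {}"
proof -
  have False if x: "x \<in> MC_gens V E k l" for x
  proof -
    have xs: "length x = Suc k" "\<forall>n<k. x!n \<noteq> x!Suc n" "tlen E x = l" using x by (auto simp: gens_iff)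
    have "(\<Sum>i<k. (1::nat)) \<le> (\<Sum>i<k. dd E (x!i) (x!Suc i))"
      by (rule sum_mono) (use xs in \<open>auto simp: dd_def\<close>)
    then show False using xs assms unfolding tlen_sum by simp
  qed
  then show ?thesis by blast
qed

lemma bd_chain: "MC_chain V E k l (MC_boundary V E (Suc k) l b)"
  unfolding MC_chain_def
proof (intro allI impI)
  fix y assume y: "y \<notin> MC_gens V E k l"
  have "dl (Suc k) l x y = 0" if x: "x \<in> MC_gens V E (Suc k) l" for x
  proof -
    have sx: "set x \<subseteq> V" using x by (auto simp: gens_iff)
    show ?thesis unfolding dl_tlen[OF sx]
      by (rule sum.neutral) (use del_gens[OF x] y in auto)
  qed
  then show "MC_boundary V E (Suc k) l b y = 0" unfolding bd_eq by simp
qed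

lemma bd_add: "MC_boundary V E k l (\<lambda>x. b1 x + b2 x) y = MC_boundary V E k l b1 y + MC_boundary V E k l b2 y"
  by (simp add: bd_eq distrib_right sum.distrib)
lemma bd_diff: "MC_boundary V E k l (\<lambda>x. b1 x - b2 x) y = MC_boundary V E k l b1 y - MC_boundary V E k l b2 y"
  by (simp add: bd_eq left_diff_distrib sum_subtractf)
lemma bd_zero: "MC_boundary V E k l (\<lambda>x. 0) y = 0"
  by (simp add: bd_eq)

lemma bd_b0: assumes S: "S \<subseteq> MC_gens V E k l" "\<forall>x\<in>S. isU x"
  shows "MC_boundary V E (Suc k) l (\<lambda>w. \<Sum>x\<in>S. if up x = w then a x else 0) y = (\<Sum>x\<in>S. a x * dl (Suc k) l (up x) y)"
proof -
  have fS: "finite S" using S finite_gens finite_subset by blast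
  have "MC_boundary V E (Suc k) l (\<lambda>w. \<Sum>x\<in>S. if up x = w then a x else 0) y
      = (\<Sum>w\<in>MC_gens V E (Suc k) l. \<Sum>x\<in>S. (if up x = w then a x * dl (Suc k) l w y else 0))"
    unfolding bd_eq sum_distrib_right by (rule sum.cong[OF refl], rule sum.cong[OF refl]) simp
  also have "\<dots> = (\<Sum>x\<in>S. \<Sum>w\<in>MC_gens V E (Suc k) l. (if up x = w then a x * dl (Suc k) l w y else 0))"
    by (rule sum.swap)
  also have "\<dots> = (\<Sum>x\<in>S. a x * dl (Suc k) l (up x) y)"
  proof (rule sum.cong[OF refl])
    fix x assume "x \<in> S"
    then have "up x \<in> MC_gens V E (Suc k) l" using up_main S by blast
    then show "(\<Sum>w\<in>MC_gens V E (Suc k) l. (if up x = w then a x * dl (Suc k) l w y else 0)) = a x * dl (Suc k) l (up x) y"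
      by (simp add: finite_gens)
  qed
  finally show ?thesis .
qed

lemma b0_chain: assumes S: "S \<subseteq> MC_gens V E k l" "\<forall>x\<in>S. isU x"
  shows "MC_chain V E (Suc k) l (\<lambda>w. \<Sum>x\<in>S. if up x = w then a x else 0)"
  unfolding MC_chain_def
proof (intro allI impI)
  fix w assume w: "w \<notin> MC_gens V E (Suc k) l"
  have "up x \<noteq> w" if "x \<in> S" for x using up_main S that w by blast
  then show "(\<Sum>x\<in>S. if up x = w then a x else 0) = 0" by (intro sum.neutral) auto
qed

lemma sgn_sq: "((-1::int)^n) * (-1)^n = 1"
  by (simp flip: power_mult_distrib)

lemma reduce: "\<forall>c. MC_chain V E k l c \<and> (\<forall>x\<in>MC_gens V E k l. isU x \<and> c x \<noteq> 0 \<longrightarrow> rho x < r) \<longrightarrow>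
  (\<exists>b. MC_chain V E (Suc k) l b \<and> (\<forall>x. isU x \<longrightarrow> c x = MC_boundary V E (Suc k) l b x))"
proof (induction r)
  case 0
  show ?case
  proof (intro allI impI)
    fix c assume c: "MC_chain V E k l c \<and> (\<forall>x\<in>MC_gens V E k l. isU x \<and> c x \<noteq> 0 \<longrightarrow> rho x < 0)"
    have "c x = 0" if "isU x" for x using c that unfolding MC_chain_def by auto
    then show "\<exists>b. MC_chain V E (Suc k) l b \<and> (\<forall>x. isU x \<longrightarrow> c x = MC_boundary V E (Suc k) l b x)"
      by (intro exI[of _ "\<lambda>_. 0"]) (simp add: MC_chain_def bd_zero)
  qed
next
  case (Suc r)
  show ?case
  proof (intro allI impI)
    fix c assume c: "MC_chain V E k l c \<and> (\<forall>x\<in>MC_gens V E k l. isU x \<and> c x \<noteq> 0 \<longrightarrow> rho x < Suc r)"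
    define S where "S = {x\<in>MC_gens V E k l. isU x \<and> rho x = r \<and> c x \<noteq> 0}"
    define a where "a x = c x * (-1)^(Suc (phi x))" for x
    define b0 where "b0 = (\<lambda>w. \<Sum>x\<in>S. if up x = w then a x else 0)"
    define c1 where "c1 = (\<lambda>y. c y - MC_boundary V E (Suc k) l b0 y)"
    have SG: "S \<subseteq> MC_gens V E k l" "\<forall>x\<in>S. isU x" unfolding S_def by auto
    have fS: "finite S" using SG finite_gens finite_subset by blast
    have b0c: "MC_chain V E (Suc k) l b0" unfolding b0_def using b0_chain[OF SG] .
    have bdb0: "MC_boundary V E (Suc k) l b0 y = (\<Sum>x\<in>S. a x * dl (Suc k) l (up x) y)" for y
      unfolding b0_def using bd_b0[OF SG] .
    have c1c: "MC_chain V E k l c1"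
      using c bd_chain[of k l b0] unfolding MC_chain_def c1_def by auto
    have c1r: "\<forall>x\<in>MC_gens V E k l. isU x \<and> c1 x \<noteq> 0 \<longrightarrow> rho x < r"
    proof (intro ballI impI)
      fix x0 assume x0: "x0 \<in> MC_gens V E k l" "isU x0 \<and> c1 x0 \<noteq> 0"
      show "rho x0 < r"
      proof (rule ccontr)
        assume "\<not> rho x0 < r"
        then have ge: "r \<le> rho x0" by simp
        have z: "a x * dl (Suc k) l (up x) x0 = 0" if "x \<in> S" "x \<noteq> x0" for x
        proof -
          have "x \<in> MC_gens V E k l" "isU x" "rho x = r" using that unfolding S_def by auto
          then have "dl (Suc k) l (up x) x0 = 0" using up_main[of x k l] x0 that(2) ge by auto
          then show ?thesis by simp
        qed
        show False
        proof (cases "x0 \<in> S")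
          case True
          have "(\<Sum>x\<in>S. a x * dl (Suc k) l (up x) x0) = a x0 * dl (Suc k) l (up x0) x0"
            using sum.remove[OF fS True, of "\<lambda>x. a x * dl (Suc k) l (up x) x0"] z by (simp add: sum.neutral)
          also have "\<dots> = c x0" using up_main[of x0 k l] x0 unfolding a_def by (simp add: mult.assoc sgn_sq)
          finally show False using x0 bdb0 unfolding c1_def by simp
        next
          case False
          have "(\<Sum>x\<in>S. a x * dl (Suc k) l (up x) x0) = 0" using z False by (intro sum.neutral) auto
          moreover have "c x0 = 0" using False c x0 ge unfolding S_def by fastforce
          ultimately show False using x0 bdb0 unfolding c1_def by simp
        qed
      qed
    qed
    obtain b1 where b1: "MC_chain V E (Suc k) l b1" "\<forall>x. isU x \<longrightarrow> c1 x = MC_boundary V E (Suc k) l b1 x"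
      using Suc.IH c1c c1r by blast
    show "\<exists>b. MC_chain V E (Suc k) l b \<and> (\<forall>x. isU x \<longrightarrow> c x = MC_boundary V E (Suc k) l b x)"
    proof (intro exI[of _ "\<lambda>w. b0 w + b1 w"] conjI allI impI)
      show "MC_chain V E (Suc k) l (\<lambda>w. b0 w + b1 w)" using b0c b1(1) unfolding MC_chain_def by auto
      fix x assume "isU x"
      then show "c x = MC_boundary V E (Suc k) l (\<lambda>w. b0 w + b1 w) x"
        using b1(2) unfolding bd_add c1_def by auto
    qed
  qed
qed

lemma cyc_zero: assumes kl: "k < l" and c: "MC_chain V E k l c" and cyc: "MC_boundary V E k l c = (\<lambda>_. 0)"
  and nu: "\<forall>x. isU x \<longrightarrow> c x = 0"
  shows "c = (\<lambda>_. 0)"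
proof (rule ccontr)
  assume "c \<noteq> (\<lambda>_. 0)"
  then obtain x0 where "c x0 \<noteq> 0" by auto
  define T where "T = {x\<in>MC_gens V E k l. c x \<noteq> 0}"
  have x0T: "x0 \<in> T" using \<open>c x0 \<noteq> 0\<close> c unfolding T_def MC_chain_def by auto
  have fT: "finite T" unfolding T_def using finite_gens by simp
  have dex: "\<exists>k'. k = Suc k' \<and> (\<exists>y. y \<in> MC_gens V E k' l \<and> isU y \<and> up y = x)" if "x \<in> T" for x
  proof -
    have "x \<in> MC_gens V E k l" "c x \<noteq> 0" using that unfolding T_def by auto
    then show ?thesis using down_ex has_two[OF _ kl] nu by blast
  qed
  obtain k' where k': "k = Suc k'" using dex[OF x0T] by blast
  define dn where "dn x = (SOME y. y \<in> MC_gens V E k' l \<and> isU y \<and> up y = x)" for x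
  have dn: "dn x \<in> MC_gens V E k' l \<and> isU (dn x) \<and> up (dn x) = x" if xT': "x \<in> T" for x
  proof -
    obtain y0 where "y0 \<in> MC_gens V E k' l \<and> isU y0 \<and> up y0 = x" using dex[OF xT'] k' by auto
    then show ?thesis unfolding dn_def by (rule someI)
  qed
  define m where "m = Max ((\<lambda>x. rho (dn x)) ` T)"
  have "m \<in> (\<lambda>x. rho (dn x)) ` T" unfolding m_def using fT x0T by (intro Max_in) auto
  then obtain x where xT: "x \<in> T" and xm: "rho (dn x) = m" by auto
  have mx: "rho (dn x') \<le> m" if "x' \<in> T" for x' unfolding m_def using fT that by (intro Max_ge) auto
  define y where "y = dn x"
  have y: "y \<in> MC_gens V E k' l" "isU y" "up y = x" using dn[OF xT] unfolding y_def by auto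
  have xG: "x \<in> MC_gens V E k l" "c x \<noteq> 0" using xT unfolding T_def by auto
  have zero: "c x' * dl k l x' y = 0" if "x' \<in> MC_gens V E k l" "x' \<noteq> x" for x'
  proof (cases "c x' = 0")
    case False
    then have x'T: "x' \<in> T" using that unfolding T_def by auto
    define y' where "y' = dn x'"
    have y': "y' \<in> MC_gens V E k' l" "isU y'" "up y' = x'" using dn[OF x'T] unfolding y'_def by auto
    have "y' \<noteq> y" using y y' that(2) by auto
    moreover have "rho y' \<le> rho y" using mx[OF x'T] xm unfolding y_def y'_def by simp
    moreover have "\<forall>w. isU w \<and> w \<noteq> y' \<and> dl (Suc k') l (up y') w \<noteq> 0 \<longrightarrow> rho w < rho y'"
      using up_main[OF y'(1,2)] by blast
    ultimately have "dl (Suc k') l (up y') y = 0" using y(2) by (metis leD)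
    then show ?thesis using y'(3) k' by simp
  qed simp
  have "0 = MC_boundary V E k l c y" using cyc by simp
  also have "\<dots> = (\<Sum>x'\<in>MC_gens V E k l. c x' * dl k l x' y)" by (rule bd_eq)
  also have "\<dots> = c x * dl k l x y"
    using sum.remove[OF finite_gens xG(1), of "\<lambda>x'. c x' * dl k l x' y"] zero by (simp add: sum.neutral)
  also have "\<dots> = c x * (-1)^(Suc (phi y))" using up_main[OF y(1,2)] y(3) k' by simp
  finally show False using xG(2) by simp
qed

lemma MHz: assumes "k \<noteq> l" shows "MH_zero V E k l"
  unfolding MH_zero_def
proof (intro allI impI)
  fix c assume c: "MC_chain V E k l c \<and> MC_boundary V E k l c = (\<lambda>_. 0)"
  show "\<exists>b. MC_chain V E (Suc k) l b \<and> MC_boundary V E (Suc k) l b = c"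
  proof (cases "l < k")
    case True
    then have "c = (\<lambda>_. 0)" using c gens_empty unfolding MC_chain_def by auto
    then show ?thesis by (intro exI[of _ "\<lambda>_. 0"]) (auto simp: MC_chain_def bd_zero)
  next
    case False
    then have kl: "k < l" using assms by simp
    define r where "r = Suc (Max (rho ` MC_gens V E k l))"
    have "\<forall>x\<in>MC_gens V E k l. rho x < r" unfolding r_def using finite_gens by (simp add: le_imp_less_Suc)
    then obtain b where b: "MC_chain V E (Suc k) l b" "\<forall>x. isU x \<longrightarrow> c x = MC_boundary V E (Suc k) l b x"
      using reduce[of k l r] c by blast
    define c' where "c' = (\<lambda>y. c y - MC_boundary V E (Suc k) l b y)"
    have c'c: "MC_chain V E k l c'" using c bd_chain[of k l b] unfolding MC_chain_def c'_def by auto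
    have c'cyc: "MC_boundary V E k l c' = (\<lambda>_. 0)"
      unfolding c'_def by (rule ext) (simp add: bd_diff c bd_bd[of k l b])
    have "\<forall>x. isU x \<longrightarrow> c' x = 0" using b(2) unfolding c'_def by simp
    then have "c' = (\<lambda>_. 0)" using cyc_zero[OF kl c'c c'cyc] by simp
    then have "\<And>y. c y - MC_boundary V E (Suc k) l b y = 0" unfolding c'_def by meson
    then have "MC_boundary V E (Suc k) l b = c" by (intro ext) simp
    then show ?thesis using b(1) by blast
  qed
qed

end

theorem theorem3p3:
  fixes V :: "'a set" and E :: "'a \<Rightarrow> 'a \<Rightarrow> bool"
  assumes "pawful V E"
  shows "diagonal V E"
proof -
  interpret pg V E using assms by unfold_locales
  show ?thesis unfolding diagonal_def using MHz by blast
qed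

end
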